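(* Let $\mathcal F$ be the set of free superintegrable systems on the complex Euclidean plane, i.e. of $3$-dimensional linear subspaces $W$ of the space of Killing tensors with $g\in W$. For $W\in\mathcal F$ let $P_W:=\{L\in S^2_0:\ L-(\operatorname{tr}L)g\in W\}$. Then $W\mapsto P_W$ is a bijection from $\mathcal F$ onto the Grassmannian $G_2(S^2_0)$ of $2$-planes in the $5$-dimensional space $S^2_0$, and composing with the Plücker map $\operatorname{span}\{L^1,L^2\}\mapsto(a_{ij})\in\mathbb P^9$ identifies $\mathcal F$ with the $6$-dimensional projective variety of skew-symmetric $5\times5$ matrices $$\begin{bmatrix}0&a_{30}&a_{20}&a_{10}&a_{00}\\-a_{30}&0&a_{21}&a_{11}&a_{01}\\-a_{20}&-a_{21}&0&a_{12}&a_{02}\\-a_{10}&-a_{11}&-a_{12}&0&a_{03}\\-a_{00}&-a_{01}&-a_{02}&-a_{03}&0\end{bmatrix}$$ of rank two (up to scalar), i.e. with the subvariety of $\mathbb P^9$ defined by the Plücker relations $a_{03}a_{21}-a_{02}a_{11}+a_{01}a_{12}=0$, $a_{03}a_{20}-a_{02}a_{10}+a_{00}a_{12}=0$, $a_{03}a_{30}-a_{01}a_{10}+a_{00}a_{11}=0$, $a_{02}a_{30}-a_{01}a_{20}+a_{00}a_{21}=0$, $a_{12}a_{30}-a_{11}a_{20}+a_{10}a_{21}=0$.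
   Context: Work on the complex Euclidean plane $\mathbb C^2$ with null coordinates $(z,w)$ and the flat holomorphic metric $g$ with $g_{zz}=g_{ww}=0$, $g_{zw}=g_{wz}=1$. A Killing tensor is a symmetric tensor field $K$ with $K_{ij,k}+K_{jk,i}+K_{ki,j}=0$; a special conformal Killing tensor (SCKT) is a symmetric tensor field $L$ with $L_{ij,k}=\tfrac12(\lambda_ig_{jk}+\lambda_jg_{ik})$, $\lambda=\operatorname{tr}L=g^{ij}L_{ij}$, $\lambda_i=\partial_i\lambda$. On this plane the SCKTs are exactly the tensors with components $L_{zz}=A_{zz}+2b_zw+cw^2$, $L_{ww}=A_{ww}+2b_wz+cz^2$, $L_{zw}=A_{zw}+b_zz+b_ww+czw$ for complex constants $A_{zz},A_{zw},A_{ww},b_z,b_w,c$, and $L\mapsto L-(\operatorname{tr}L)g$ is a linear isomorphism from SCKTs onto Killing tensors sending $g$ to $-g$. Let $S^2_0$ be the $5$-dimensional space of SCKTs with $A_{zw}=0$. For $L^1,L^2\in S^2_0$ (with parameters carrying superscripts $1,2$) the Plücker coordinates of $\operatorname{span}\{L^1,L^2\}$ are $a_{30}=2(A^1_{zz}b^2_z-b^1_zA^2_{zz})$, $a_{20}=A^1_{zz}c^2-c^1A^2_{zz}$, $a_{10}=2(A^1_{zz}b^2_w-b^1_wA^2_{zz})$, $a_{00}=A^1_{zz}A^2_{ww}-A^1_{ww}A^2_{zz}$, $a_{21}=2(b^1_zc^2-c^1b^2_z)$, $a_{11}=4(b^1_zb^2_w-b^1_wb^2_z)$, $a_{01}=2(b^1_zA^2_{ww}-A^1_{ww}b^2_z)$,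 $a_{12}=2(c^1b^2_w-b^1_wc^2)$, $a_{02}=c^1A^2_{ww}-A^1_{ww}c^2$, $a_{03}=2(b^1_wA^2_{ww}-A^1_{ww}b^2_w)$, regarded as a point of $\mathbb P^9$. *)

theory Defs
  imports "HOL-Analysis.Analysis" "HOL-Library.Function_Algebras"
begin

text \<open>A symmetric tensor field is given by its three independent components
  K_zz, K_zw (= K_wz), K_ww, each a complex function of the point (z,w).\<close>

datatype idx = ZZ | ZW | WW

type_synonym tfield = "complex \<times> complex \<Rightarrow> idx \<Rightarrow> complex"

definition tsc :: "complex \<Rightarrow> tfield \<Rightarrow> tfield" where
  "tsc c K = (\<lambda>p i. c * K p i)"

interpretation tf: vector_space tsc
  by unfold_locales (auto simp: tsc_def fun_eq_iff algebra_simps)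

definition gmet :: tfield where
  "gmet = (\<lambda>p i. if i = ZW then 1 else 0)"

text \<open>Trace with respect to g: g^zw = g^wz = 1, g^zz = g^ww = 0, so tr L = L_zw + L_wz.\<close>
definition ttr :: "tfield \<Rightarrow> complex \<times> complex \<Rightarrow> complex" where
  "ttr L = (\<lambda>p. 2 * L p ZW)"

definition sckt :: "complex \<Rightarrow> complex \<Rightarrow> complex \<Rightarrow> complex \<Rightarrow> complex \<Rightarrow> complex \<Rightarrow> tfield" where
  "sckt Azz Azw Aww bz bw c = (\<lambda>(z,w) i. case i of
      ZZ \<Rightarrow> Azz + 2 * bz * w + c * w^2
    | WW \<Rightarrow> Aww + 2 * bw * z + c * z^2
    | ZW \<Rightarrow> Azw + bz * z + bw * w + c * z * w)"

definition SCKT :: "tfield set" where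
  "SCKT = {sckt Azz Azw Aww bz bw c | Azz Azw Aww bz bw c. True}"

definition kt_of :: "tfield \<Rightarrow> tfield" where
  "kt_of L = (\<lambda>p i. L p i - ttr L p * gmet p i)"

definition KT :: "tfield set" where
  "KT = kt_of ` SCKT"

definition s20 :: "complex \<times> complex \<times> complex \<times> complex \<times> complex \<Rightarrow> tfield" where
  "s20 q = (case q of (Azz, Aww, bz, bw, c) \<Rightarrow> sckt Azz 0 Aww bz bw c)"

definition S20 :: "tfield set" where
  "S20 = range s20"

definition FSI :: "tfield set set" where
  "FSI = {W. W \<subseteq> KT \<and> tf.subspace W \<and> tf.dim W = 3 \<and> gmet \<in> W}"

definition PW :: "tfield set \<Rightarrow> tfield set" where
  "PW W = {L \<in> S20. kt_of L \<in> W}"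

definition G2S20 :: "tfield set set" where
  "G2S20 = {P. P \<subseteq> S20 \<and> tf.subspace P \<and> tf.dim P = 2}"

definition is_basis2 :: "tfield set \<Rightarrow> _ \<Rightarrow> _ \<Rightarrow> bool" where
  "is_basis2 P q1 q2 \<longleftrightarrow> s20 q1 \<noteq> s20 q2 \<and> tf.independent {s20 q1, s20 q2}
      \<and> tf.span {s20 q1, s20 q2} = P"

datatype pidx = a30 | a20 | a10 | a00 | a21 | a11 | a01 | a12 | a02 | a03

definition plk :: "complex \<times> complex \<times> complex \<times> complex \<times> complex
   \<Rightarrow> complex \<times> complex \<times> complex \<times> complex \<times> complex \<Rightarrow> pidx \<Rightarrow> complex" where
  "plk q1 q2 = (case q1 of (Azz1, Aww1, bz1, bw1, c1) \<Rightarrow> case q2 of (Azz2, Aww2, bz2, bw2, c2) \<Rightarrow>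
     (\<lambda>k. case k of
        a30 \<Rightarrow> 2 * (Azz1 * bz2 - bz1 * Azz2)
      | a20 \<Rightarrow> Azz1 * c2 - c1 * Azz2
      | a10 \<Rightarrow> 2 * (Azz1 * bw2 - bw1 * Azz2)
      | a00 \<Rightarrow> Azz1 * Aww2 - Aww1 * Azz2
      | a21 \<Rightarrow> 2 * (bz1 * c2 - c1 * bz2)
      | a11 \<Rightarrow> 4 * (bz1 * bw2 - bw1 * bz2)
      | a01 \<Rightarrow> 2 * (bz1 * Aww2 - Aww1 * bz2)
      | a12 \<Rightarrow> 2 * (c1 * bw2 - bw1 * c2)
      | a02 \<Rightarrow> c1 * Aww2 - Aww1 * c2
      | a03 \<Rightarrow> 2 * (bw1 * Aww2 - Aww1 * bw2)))"

definition proportional :: "(pidx \<Rightarrow> complex) \<Rightarrow> (pidx \<Rightarrow> complex) \<Rightarrow> bool" where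
  "proportional a b \<longleftrightarrow> (\<exists>c. c \<noteq> 0 \<and> a = (\<lambda>k. c * b k))"

text \<open>Affine cone (minus 0) over the subvariety of P^9 cut out by the Pluecker relations.\<close>
definition plucker_var :: "(pidx \<Rightarrow> complex) set" where
  "plucker_var = {a. a \<noteq> 0
     \<and> a a03 * a a21 - a a02 * a a11 + a a01 * a a12 = 0
     \<and> a a03 * a a20 - a a02 * a a10 + a a00 * a a12 = 0
     \<and> a a03 * a a30 - a a01 * a a10 + a a00 * a a11 = 0
     \<and> a a02 * a a30 - a a01 * a a20 + a a00 * a a21 = 0
     \<and> a a12 * a a30 - a a11 * a a20 + a a10 * a a21 = 0}"

definition ix5 :: "5 \<Rightarrow> nat" where
  "ix5 i = nat (Rep_bit1 i)"

definition skewmat :: "(pidx \<Rightarrow> complex) \<Rightarrow> complex^5^5" where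
  "skewmat a = (\<chi> i j.
     [[0, a a30, a a20, a a10, a a00],
      [- a a30, 0, a a21, a a11, a a01],
      [- a a20, - a a21, 0, a a12, a a02],
      [- a a10, - a a11, - a a12, 0, a a03],
      [- a a00, - a a01, - a a02, - a a03, 0]] ! ix5 i ! ix5 j)"

end

theory Submission
  imports Defs
begin


definition vq :: "complex\<times>complex\<times>complex\<times>complex\<times>complex \<Rightarrow> nat \<Rightarrow> complex" where
 "vq q k = (case q of (Azz,Aww,bz,bw,c) \<Rightarrow> if k=0 then Azz else if k=1 then 2*bz else if k=2 then c else if k=3 then 2*bw else Aww)"

definition pp :: "(nat\<Rightarrow>complex) \<Rightarrow> (nat\<Rightarrow>complex) \<Rightarrow> nat \<Rightarrow> nat \<Rightarrow> complex" where
 "pp u v i j = u i * v j - u j * v i"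

definition pos :: "pidx \<Rightarrow> nat\<times>nat" where
 "pos x = (case x of a30 \<Rightarrow> (0,1) | a20 \<Rightarrow> (0,2) | a10 \<Rightarrow> (0,3) | a00 \<Rightarrow> (0,4) | a21 \<Rightarrow> (1,2)
   | a11 \<Rightarrow> (1,3) | a01 \<Rightarrow> (1,4) | a12 \<Rightarrow> (2,3) | a02 \<Rightarrow> (2,4) | a03 \<Rightarrow> (3,4))"

lemma plk_pp: "plk q1 q2 x = pp (vq q1) (vq q2) (fst (pos x)) (snd (pos x))"
  by (cases q1; cases q2; cases x) (simp_all add: plk_def vq_def pp_def pos_def algebra_simps)

definition lin2 :: "complex \<Rightarrow> complex\<times>complex\<times>complex\<times>complex\<times>complex \<Rightarrow> complex \<Rightarrow> complex\<times>complex\<times>complex\<times>complex\<times>complex \<Rightarrow> complex\<times>complex\<times>complex\<times>complex\<times>complex" where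
 "lin2 \<alpha> q1 \<beta> q2 = (case q1 of (a1,b1,c1,d1,e1) \<Rightarrow> case q2 of (a2,b2,c2,d2,e2) \<Rightarrow>
    (\<alpha>*a1+\<beta>*a2, \<alpha>*b1+\<beta>*b2, \<alpha>*c1+\<beta>*c2, \<alpha>*d1+\<beta>*d2, \<alpha>*e1+\<beta>*e2))"

lemma vq_lin2: "vq (lin2 \<alpha> q1 \<beta> q2) k = \<alpha> * vq q1 k + \<beta> * vq q2 k"
  by (cases q1; cases q2) (simp add: lin2_def vq_def algebra_simps)

lemma two_aux: "2*(x::complex) = \<alpha>*(2*y) + \<beta>*(2*z) \<longleftrightarrow> x = \<alpha>*y+\<beta>*z"
proof -
  have h: "\<alpha>*(2*y) + \<beta>*(2*z) = 2*(\<alpha>*y+\<beta>*z)" by (simp add: algebra_simps)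
  have "2*x = 2*(\<alpha>*y+\<beta>*z) \<longleftrightarrow> x = \<alpha>*y+\<beta>*z" by (simp only: mult_cancel_left) simp
  then show ?thesis using h by metis
qed

lemma vq_eq_lin2: assumes "\<forall>k<5. vq r k = \<alpha> * vq q1 k + \<beta> * vq q2 k" shows "r = lin2 \<alpha> q1 \<beta> q2"
proof -
  obtain a b c d e where r: "r = (a,b,c,d,e)" by (cases r) auto
  obtain a1 b1 c1 d1 e1 where q1: "q1 = (a1,b1,c1,d1,e1)" by (cases q1) auto
  obtain a2 b2 c2 d2 e2 where q2: "q2 = (a2,b2,c2,d2,e2)" by (cases q2) auto
  have "vq r 0 = \<alpha> * vq q1 0 + \<beta> * vq q2 0" "vq r 1 = \<alpha> * vq q1 1 + \<beta> * vq q2 1"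
     "vq r 2 = \<alpha> * vq q1 2 + \<beta> * vq q2 2" "vq r 3 = \<alpha> * vq q1 3 + \<beta> * vq q2 3"
     "vq r 4 = \<alpha> * vq q1 4 + \<beta> * vq q2 4" using assms by auto
  then show ?thesis by (simp add: r q1 q2 lin2_def vq_def two_aux)
qed

lemma vq_min: "vq q k = vq q (min k 4)"
  by (cases q) (auto simp: vq_def min_def)

lemma pp_min: "pp (vq q1) (vq q2) i j = pp (vq q1) (vq q2) (min i 4) (min j 4)"
  by (simp add: pp_def vq_min[of q1 i] vq_min[of q2 i] vq_min[of q1 j] vq_min[of q2 j])

lemma idx_cases:
  assumes P: "\<And>x. R (fst (pos x)) (snd (pos x))" and S: "\<And>a b. R a b \<Longrightarrow> R b a" and D: "\<And>a. R a a"
    and "a \<le> 4" "b \<le> 4"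
  shows "R a b"
proof -
  have h: "R 0 1" "R 0 2" "R 0 3" "R 0 4" "R 1 2" "R 1 3" "R 1 4" "R 2 3" "R 2 4" "R 3 4"
    using P[of a30] P[of a20] P[of a10] P[of a00] P[of a21] P[of a11] P[of a01] P[of a12] P[of a02] P[of a03]
    by (simp_all add: pos_def)
  have "a = 0 \<or> a = 1 \<or> a = 2 \<or> a = 3 \<or> a = 4" "b = 0 \<or> b = 1 \<or> b = 2 \<or> b = 3 \<or> b = 4"
    using assms(4,5) by arith+
  then show ?thesis using h S D by (elim disjE) metis+
qed

lemma pp_prop:
  assumes "plk q1 q2 = (\<lambda>x. c * plk r1 r2 x)"
  shows "pp (vq q1) (vq q2) i j = c * pp (vq r1) (vq r2) i j"
proof -
  have "pp (vq q1) (vq q2) a b = c * pp (vq r1) (vq r2) a b" if "a \<le> 4" "b \<le> 4" for a b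
  proof (rule idx_cases[OF _ _ _ that])
    show "pp (vq q1) (vq q2) (fst (pos x)) (snd (pos x)) = c * pp (vq r1) (vq r2) (fst (pos x)) (snd (pos x))" for x
      using fun_cong[OF assms, of x] by (simp add: plk_pp)
    show "pp (vq q1) (vq q2) b a = c * pp (vq r1) (vq r2) b a"
      if "pp (vq q1) (vq q2) a b = c * pp (vq r1) (vq r2) a b" for a b
      using that unfolding pp_def by (simp add: algebra_simps)
    show "pp (vq q1) (vq q2) a a = c * pp (vq r1) (vq r2) a a" for a by (simp add: pp_def)
  qed
  then show ?thesis by (subst pp_min, subst (2) pp_min) simp
qed

lemma cramer:
  assumes "pp u v i j \<noteq> 0" "\<forall>k. x k * pp u v i j - x j * pp u v i k + x i * pp u v j k = 0"
  shows "\<forall>k. x k = (x i * v j - x j * v i)/pp u v i j * u k + (u i * x j - u j * x i)/pp u v i j * v k"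
proof
  fix k
  have "x k * pp u v i j - x j * pp u v i k + x i * pp u v j k = 0" using assms(2) by auto
  then have e: "x k * pp u v i j = (x i * v j - x j * v i) * u k + (u i * x j - u j * x i) * v k"
    unfolding pp_def by algebra
  show "x k = (x i * v j - x j * v i)/pp u v i j * u k + (u i * x j - u j * x i)/pp u v i j * v k"
  proof -
    have "x k = ((x i * v j - x j * v i) * u k + (u i * x j - u j * x i) * v k) / pp u v i j"
      using assms(1) e by (simp add: eq_divide_eq)
    then show ?thesis by (simp add: add_divide_distrib times_divide_eq_left)
  qed
qed



lemma tsc_app[simp]: "tsc c K p i = c * K p i" by (simp add: tsc_def)

lemma s20_app: "s20 (Azz,Aww,bz,bw,c) (z,w) i = (case i of ZZ \<Rightarrow> Azz + 2*bz*w + c*w^2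
   | WW \<Rightarrow> Aww + 2*bw*z + c*z^2 | ZW \<Rightarrow> bz*z + bw*w + c*z*w)"
  by (simp add: s20_def sckt_def)

lemma gmet_app: "gmet p i = (if i = ZW then 1 else 0)" by (simp add: gmet_def)

lemma s20_lin2: "s20 (lin2 \<alpha> q1 \<beta> q2) = tsc \<alpha> (s20 q1) + tsc \<beta> (s20 q2)"
  by (cases q1; cases q2) (auto simp: fun_eq_iff lin2_def s20_def sckt_def algebra_simps split: idx.split prod.split)

lemma s20g_inj:
  assumes "s20 q + tsc t gmet = s20 r + tsc u gmet"
  shows "q = r \<and> t = u"
proof -
  obtain a b c d e where q: "q = (a,b,c,d,e)" by (cases q) auto
  obtain a' b' c' d' e' where r: "r = (a',b',c',d',e')" by (cases r) auto
  have E: "s20 q p i + t * gmet p i = s20 r p i + u * gmet p i" for p i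
    using fun_cong[OF fun_cong[OF assms, of p], of i] by simp
  have h1: "a = a'" using E[of "(0,0)" ZZ] by (simp add: q r s20_app gmet_app)
  have h2: "b = b'" using E[of "(0,0)" WW] by (simp add: q r s20_app gmet_app)
  have h3: "t = u" using E[of "(0,0)" ZW] by (simp add: q r s20_app gmet_app)
  have h4: "a + 2*c + e = a' + 2*c' + e'" using E[of "(0,1)" ZZ] by (simp add: q r s20_app gmet_app)
  have h5: "a - 2*c + e = a' - 2*c' + e'" using E[of "(0,-1)" ZZ] by (simp add: q r s20_app gmet_app)
  have h6: "b + 2*d + e = b' + 2*d' + e'" using E[of "(1,0)" WW] by (simp add: q r s20_app gmet_app)
  have "4*c = 4*c'" using h4 h5 by algebra
  then have h7: "c = c'" by simp
  have h8: "e = e'" using h1 h4 h7 by simp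
  have "2*d = 2*d'" using h2 h6 h8 by simp
  then have h9: "d = d'" by simp
  show ?thesis using h1 h2 h3 h7 h8 h9 q r by simp
qed

lemma s20_inj: "s20 q = s20 r \<Longrightarrow> q = r"
  using s20g_inj[of q 0 r 0] by simp

lemma s20_zero: "s20 (0,0,0,0,0) = 0"
  by (auto simp: fun_eq_iff s20_def sckt_def split: idx.split prod.split)

lemma kt_of_app: "kt_of L p i = (if i = ZW then - L p ZW else L p i)"
  by (auto simp: kt_of_def ttr_def gmet_def)

lemma kt_of_add: "kt_of (x + y) = kt_of x + kt_of y"
  by (auto simp: fun_eq_iff kt_of_app)
lemma kt_of_tsc: "kt_of (tsc c x) = tsc c (kt_of x)"
  by (auto simp: fun_eq_iff kt_of_app)
lemma kt_of_kt_of[simp]: "kt_of (kt_of x) = x"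
  by (auto simp: fun_eq_iff kt_of_app)
lemma kt_of_gmet: "kt_of gmet = tsc (-1) gmet"
  by (auto simp: fun_eq_iff kt_of_app gmet_app)
lemma kt_of_zero: "kt_of 0 = 0"
  by (auto simp: fun_eq_iff kt_of_app)

lemma sckt_s20: "sckt Azz Azw Aww bz bw c = s20 (Azz,Aww,bz,bw,c) + tsc Azw gmet"
  by (auto simp: fun_eq_iff s20_def sckt_def gmet_app split: idx.split)

lemma SCKT_char: "SCKT = {s20 q + tsc t gmet | q t. True}"
  unfolding SCKT_def sckt_s20
proof (intro set_eqI iffI)
  fix x assume "x \<in> {s20 (Azz, Aww, bz, bw, c) + tsc Azw gmet |Azz Azw Aww bz bw c. True}"
  then show "x \<in> {s20 q + tsc t gmet | q t. True}" by blast
next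
  fix x assume "x \<in> {s20 q + tsc t gmet | q t. True}"
  then obtain q t where x: "x = s20 q + tsc t gmet" by blast
  obtain a b c d e where "q = (a,b,c,d,e)" by (cases q)
  then show "x \<in> {s20 (Azz, Aww, bz, bw, c) + tsc Azw gmet |Azz Azw Aww bz bw c. True}" using x by blast
qed

lemma KT_char: "x \<in> KT \<longleftrightarrow> (\<exists>q t. x = kt_of (s20 q + tsc t gmet))"
  unfolding KT_def SCKT_char by blast

lemma diff_range: "v - a \<in> range f \<longleftrightarrow> (\<exists>m. v = a + f m)" for v a :: "'a::ab_group_add"
proof
  assume "v - a \<in> range f" then obtain m where "v - a = f m" by auto
  then have "v = a + f m" by (metis add.commute diff_add_cancel)
  then show "\<exists>m. v = a + f m" by blast
next
  assume "\<exists>m. v = a + f m" then obtain m where "v = a + f m" by blast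
  then have "v - a = f m" by simp
  then show "v - a \<in> range f" by (metis rangeI)
qed

lemma span2: "tf.span {x,y} = {tsc \<alpha> x + tsc \<beta> y | \<alpha> \<beta>. True}"
proof -
  have "tf.span {x,y} = {v. \<exists>k. v - tsc k x \<in> range (\<lambda>k. tsc k y)}"
    using tf.span_insert[of x "{y}"] tf.span_singleton[of y] by simp
  also have "\<dots> = {tsc \<alpha> x + tsc \<beta> y | \<alpha> \<beta>. True}"
    unfolding diff_range by blast
  finally show ?thesis .
qed

lemma span3: "tf.span {x,y,z} = {tsc \<alpha> x + tsc \<beta> y + tsc \<gamma> z | \<alpha> \<beta> \<gamma>. True}"
proof -
  have "tf.span {x,y,z} = {v. \<exists>k. v - tsc k x \<in> tf.span {y,z}}"
    using tf.span_insert[of x "{y,z}"] by simp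
  also have "\<dots> = {tsc \<alpha> x + tsc \<beta> y + tsc \<gamma> z | \<alpha> \<beta> \<gamma>. True}"
    unfolding span2
  proof (intro set_eqI iffI)
    fix v assume "v \<in> {v. \<exists>k. v - tsc k x \<in> {tsc \<alpha> y + tsc \<beta> z |\<alpha> \<beta>. True}}"
    then obtain k a b where h: "v - tsc k x = tsc a y + tsc b z" by blast
    then have "v = tsc k x + tsc a y + tsc b z" by (simp add: diff_eq_eq ac_simps)
    then show "v \<in> {tsc \<alpha> x + tsc \<beta> y + tsc \<gamma> z |\<alpha> \<beta> \<gamma>. True}" by blast
  next
    fix v assume "v \<in> {tsc \<alpha> x + tsc \<beta> y + tsc \<gamma> z |\<alpha> \<beta> \<gamma>. True}"
    then obtain k a b where h: "v = tsc k x + tsc a y + tsc b z" by blast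
    then have "v - tsc k x = tsc a y + tsc b z" by (simp add: ac_simps)
    then show "v \<in> {v. \<exists>k. v - tsc k x \<in> {tsc \<alpha> y + tsc \<beta> z |\<alpha> \<beta>. True}}" by blast
  qed
  finally show ?thesis .
qed

lemma indep2:
  assumes "\<And>\<alpha> \<beta>. tsc \<alpha> x + tsc \<beta> y = 0 \<Longrightarrow> \<alpha> = 0 \<and> \<beta> = 0"
  shows "x \<noteq> y" "tf.independent {x,y}"
proof -
  show xy: "x \<noteq> y"
  proof
    assume "x = y"
    then have "tsc 1 x + tsc (-1) y = 0" by (simp add: tf.scale_minus_left)
    then show False using assms by fastforce
  qed
  show "tf.independent {x,y}"
  proof
    assume "tf.dependent {x,y}"
    then obtain u where u: "(\<exists>v\<in>{x,y}. u v \<noteq> 0)" "(\<Sum>v\<in>{x,y}. tsc (u v) v) = 0"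
      using tf.dependent_finite[of "{x,y}"] by auto
    then have "tsc (u x) x + tsc (u y) y = 0" using xy by simp
    then show False using assms u(1) by auto
  qed
qed

lemma indep2_rev:
  assumes "x \<noteq> y" "tf.independent {x,y}" "tsc \<alpha> x + tsc \<beta> y = 0"
  shows "\<alpha> = 0 \<and> \<beta> = 0"
proof (rule ccontr)
  assume n: "\<not> (\<alpha> = 0 \<and> \<beta> = 0)"
  let ?u = "\<lambda>v. if v = x then \<alpha> else \<beta>"
  have A: "(\<Sum>v\<in>{x,y}. tsc (?u v) v) = 0" using assms by simp
  have B: "\<exists>v\<in>{x,y}. ?u v \<noteq> 0" using n assms(1) by auto
  have fin: "finite {x,y}" by simp
  have "tf.dependent {x,y}" unfolding tf.dependent_finite[OF fin]
    by (rule exI[where x = ?u]) (use A B in blast)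
  then show False using assms(2) by blast
qed

lemma indep3:
  assumes "\<And>\<alpha> \<beta> \<gamma>. tsc \<alpha> x + tsc \<beta> y + tsc \<gamma> z = 0 \<Longrightarrow> \<alpha> = 0 \<and> \<beta> = 0 \<and> \<gamma> = 0"
  shows "x \<noteq> y" "x \<noteq> z" "y \<noteq> z" "tf.independent {x,y,z}"
proof -
  show xy: "x \<noteq> y"
  proof
    assume "x = y"
    then have "tsc 1 x + tsc (-1) y + tsc 0 z = 0" by (simp add: tf.scale_minus_left)
    then show False using assms by fastforce
  qed
  show xz: "x \<noteq> z"
  proof
    assume "x = z"
    then have "tsc 1 x + tsc 0 y + tsc (-1) z = 0" by (simp add: tf.scale_minus_left)
    then show False using assms by fastforce
  qed
  show yz: "y \<noteq> z"
  proof
    assume "y = z"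
    then have "tsc 0 x + tsc 1 y + tsc (-1) z = 0" by (simp add: tf.scale_minus_left)
    then show False using assms by fastforce
  qed
  show "tf.independent {x,y,z}"
  proof
    assume "tf.dependent {x,y,z}"
    then obtain u where u: "(\<exists>v\<in>{x,y,z}. u v \<noteq> 0)" "(\<Sum>v\<in>{x,y,z}. tsc (u v) v) = 0"
      using tf.dependent_finite[of "{x,y,z}"] by auto
    then have "tsc (u x) x + tsc (u y) y + tsc (u z) z = 0" using xy xz yz by (simp add: add.assoc)
    then show False using assms u(1) by auto
  qed
qed

lemma indep3_rev:
  assumes "x \<noteq> y" "x \<noteq> z" "y \<noteq> z" "tf.independent {x,y,z}" "tsc \<alpha> x + tsc \<beta> y + tsc \<gamma> z = 0"
  shows "\<alpha> = 0 \<and> \<beta> = 0 \<and> \<gamma> = 0"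
proof (rule ccontr)
  assume n: "\<not> (\<alpha> = 0 \<and> \<beta> = 0 \<and> \<gamma> = 0)"
  let ?u = "\<lambda>v. if v = x then \<alpha> else if v = y then \<beta> else \<gamma>"
  have A: "(\<Sum>v\<in>{x,y,z}. tsc (?u v) v) = 0" using assms by (simp add: add.assoc)
  have B: "\<exists>v\<in>{x,y,z}. ?u v \<noteq> 0" using n assms(1,2,3) by auto
  have fin: "finite {x,y,z}" by simp
  have "tf.dependent {x,y,z}" unfolding tf.dependent_finite[OF fin]
    by (rule exI[where x = ?u]) (use A B in blast)
  then show False using assms(4) by blast
qed



definition Pof where "Pof q1 q2 = tf.span {s20 q1, s20 q2}"
definition Wof where "Wof q1 q2 = tf.span {gmet, kt_of (s20 q1), kt_of (s20 q2)}"

lemma tsc0: "tsc 0 K = 0" by (simp add: tsc_def fun_eq_iff)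

lemma vq_zero[simp]: "vq (0,0,0,0,0) k = 0" by (simp add: vq_def)

lemma plk_nz: assumes "plk q1 q2 \<noteq> 0" shows "\<exists>i j. pp (vq q1) (vq q2) i j \<noteq> 0"
proof -
  from assms obtain x where "plk q1 q2 x \<noteq> 0" by (auto simp: fun_eq_iff)
  then show ?thesis by (metis plk_pp)
qed

lemma lin_zero:
  assumes "plk q1 q2 \<noteq> 0" "lin2 \<alpha> q1 \<beta> q2 = (0,0,0,0,0)"
  shows "\<alpha> = 0 \<and> \<beta> = 0"
proof -
  obtain i j where ij: "pp (vq q1) (vq q2) i j \<noteq> 0" using plk_nz[OF assms(1)] by blast
  have z: "\<alpha> * vq q1 k + \<beta> * vq q2 k = 0" for k
    using vq_lin2[of \<alpha> q1 \<beta> q2 k] assms(2) by simp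
  have "\<alpha> * pp (vq q1) (vq q2) i j = 0" using z[of i] z[of j] unfolding pp_def by algebra
  moreover have "\<beta> * pp (vq q1) (vq q2) i j = 0" using z[of i] z[of j] unfolding pp_def by algebra
  ultimately show ?thesis using ij by simp
qed

lemma plk_zero_dep:
  assumes "plk q1 q2 = 0"
  shows "\<exists>\<alpha> \<beta>. (\<alpha> \<noteq> 0 \<or> \<beta> \<noteq> 0) \<and> lin2 \<alpha> q1 \<beta> q2 = (0,0,0,0,0)"
proof (cases "\<forall>i\<le>4. vq q1 i = 0")
  case True
  then have "\<forall>k<5. vq q1 k = 1 * vq q1 k + 0 * vq q2 k" by simp
  have "\<forall>k<5. vq (0,0,0,0,0) k = 1 * vq q1 k + 0 * vq q2 k" using True by simp
  then have "(0,0,0,0,0) = lin2 1 q1 0 q2" by (rule vq_eq_lin2)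
  then show ?thesis by (metis one_neq_zero)
next
  case False
  then obtain i where i: "vq q1 i \<noteq> 0" by blast
  have pz: "pp (vq q1) (vq q2) a b = 0" for a b
    using pp_prop[of q1 q2 0 q1 q2 a b] assms by (simp add: fun_eq_iff)
  have "\<forall>k<5. vq (0,0,0,0,0) k = vq q2 i * vq q1 k + (- vq q1 i) * vq q2 k"
    using pz[of i] by (auto simp: pp_def algebra_simps)
  then have "(0,0,0,0,0) = lin2 (vq q2 i) q1 (- vq q1 i) q2" by (rule vq_eq_lin2)
  then show ?thesis using i by (metis neg_equal_0_iff_equal)
qed

lemma s20_lin2_zero: "tsc \<alpha> (s20 q1) + tsc \<beta> (s20 q2) = 0 \<longleftrightarrow> lin2 \<alpha> q1 \<beta> q2 = (0,0,0,0,0)"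
  using s20_inj[of "lin2 \<alpha> q1 \<beta> q2" "(0,0,0,0,0)"] s20_zero by (auto simp: s20_lin2[symmetric])

lemma basis_iff: "is_basis2 P q1 q2 \<longleftrightarrow> plk q1 q2 \<noteq> 0 \<and> P = Pof q1 q2"
proof
  assume b: "is_basis2 P q1 q2"
  have "plk q1 q2 \<noteq> 0"
  proof
    assume "plk q1 q2 = 0"
    then obtain \<alpha> \<beta> where ab: "\<alpha> \<noteq> 0 \<or> \<beta> \<noteq> 0" "lin2 \<alpha> q1 \<beta> q2 = (0,0,0,0,0)"
      using plk_zero_dep by blast
    then have "tsc \<alpha> (s20 q1) + tsc \<beta> (s20 q2) = 0" by (simp add: s20_lin2_zero)
    then show False using indep2_rev[of "s20 q1" "s20 q2"] b ab(1) unfolding is_basis2_def by blast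
  qed
  then show "plk q1 q2 \<noteq> 0 \<and> P = Pof q1 q2" using b by (simp add: is_basis2_def Pof_def)
next
  assume h: "plk q1 q2 \<noteq> 0 \<and> P = Pof q1 q2"
  have "\<And>\<alpha> \<beta>. tsc \<alpha> (s20 q1) + tsc \<beta> (s20 q2) = 0 \<Longrightarrow> \<alpha> = 0 \<and> \<beta> = 0"
    using lin_zero[of q1 q2] h s20_lin2_zero by blast
  from indep2[OF this] show "is_basis2 P q1 q2" using h by (simp add: is_basis2_def Pof_def)
qed

lemma in_Pof: "s20 r \<in> Pof q1 q2 \<longleftrightarrow> (\<exists>\<alpha> \<beta>. r = lin2 \<alpha> q1 \<beta> q2)"
proof -
  have "s20 r \<in> Pof q1 q2 \<longleftrightarrow> (\<exists>\<alpha> \<beta>. s20 r = s20 (lin2 \<alpha> q1 \<beta> q2))"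
    unfolding Pof_def span2 s20_lin2 by blast
  then show ?thesis using s20_inj by blast
qed

lemma Pof_sub: "Pof q1 q2 \<subseteq> S20"
  unfolding Pof_def span2 S20_def by (auto simp: s20_lin2[symmetric])

lemma Pof_G2: assumes "plk q1 q2 \<noteq> 0" shows "Pof q1 q2 \<in> G2S20"
proof -
  have b: "is_basis2 (Pof q1 q2) q1 q2" using assms basis_iff by blast
  then have "tf.dim (Pof q1 q2) = card {s20 q1, s20 q2}"
    unfolding Pof_def is_basis2_def by (simp add: tf.dim_eq_card_independent)
  then have "tf.dim (Pof q1 q2) = 2" using b unfolding is_basis2_def by simp
  then show ?thesis using Pof_sub unfolding G2S20_def Pof_def by auto
qed

lemma kt_of_comb: "kt_of (tsc \<gamma> gmet + tsc \<alpha> A + tsc \<beta> B) = tsc \<alpha> (kt_of A) + tsc \<beta> (kt_of B) + tsc (-\<gamma>) gmet"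
  by (auto simp: fun_eq_iff kt_of_app gmet_app)

lemma kt_of_comb2: "kt_of (tsc \<alpha> A + tsc \<beta> B) = tsc 0 gmet + tsc \<alpha> (kt_of A) + tsc \<beta> (kt_of B)"
  by (auto simp: fun_eq_iff kt_of_app gmet_app)

lemma PW_Wof: "PW (Wof q1 q2) = Pof q1 q2"
proof (intro set_eqI iffI)
  fix L assume "L \<in> PW (Wof q1 q2)"
  then obtain r where r: "L = s20 r" and "kt_of (s20 r) \<in> Wof q1 q2" unfolding PW_def S20_def by auto
  then obtain \<gamma> \<alpha> \<beta> where h: "kt_of (s20 r) = tsc \<gamma> gmet + tsc \<alpha> (kt_of (s20 q1)) + tsc \<beta> (kt_of (s20 q2))"
    unfolding Wof_def span3 by blast
  have "s20 r = kt_of (kt_of (s20 r))" by simp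
  also have "\<dots> = s20 (lin2 \<alpha> q1 \<beta> q2) + tsc (-\<gamma>) gmet" unfolding h kt_of_comb s20_lin2 by simp
  finally have "s20 r + tsc 0 gmet = s20 (lin2 \<alpha> q1 \<beta> q2) + tsc (-\<gamma>) gmet" by (simp add: tsc0)
  then have "r = lin2 \<alpha> q1 \<beta> q2" using s20g_inj by blast
  then show "L \<in> Pof q1 q2" using r in_Pof by blast
next
  fix L assume "L \<in> Pof q1 q2"
  then obtain \<alpha> \<beta> where L: "L = tsc \<alpha> (s20 q1) + tsc \<beta> (s20 q2)" unfolding Pof_def span2 by blast
  have "L \<in> S20" unfolding L S20_def s20_lin2[symmetric] by simp
  moreover have "kt_of L \<in> Wof q1 q2" unfolding L kt_of_comb2 Wof_def span3 by blast
  ultimately show "L \<in> PW (Wof q1 q2)" unfolding PW_def by simp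
qed



lemma gmet_nz: "gmet \<noteq> 0"
proof
  assume "gmet = 0"
  then have "gmet (0,0) ZW = 0" by simp
  then show False by (simp add: gmet_app)
qed

lemma kt_of_s20g: "kt_of (s20 q + tsc t gmet) = tsc (-t) gmet + tsc 1 (kt_of (s20 q)) + tsc 0 (kt_of (s20 q))"
  by (auto simp: fun_eq_iff kt_of_app gmet_app)

lemma Wof_FSI: assumes "plk q1 q2 \<noteq> 0" shows "Wof q1 q2 \<in> FSI"
proof -
  let ?k1 = "kt_of (s20 q1)" and ?k2 = "kt_of (s20 q2)"
  have sub: "Wof q1 q2 \<subseteq> KT"
  proof
    fix x assume "x \<in> Wof q1 q2"
    then obtain \<gamma> \<alpha> \<beta> where x: "x = tsc \<gamma> gmet + tsc \<alpha> ?k1 + tsc \<beta> ?k2" unfolding Wof_def span3 by blast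
    have "x = kt_of (s20 (lin2 \<alpha> q1 \<beta> q2) + tsc (-\<gamma>) gmet)"
      unfolding x s20_lin2 by (auto simp: fun_eq_iff kt_of_app gmet_app)
    then show "x \<in> KT" unfolding KT_char by blast
  qed
  have triv: "\<gamma> = 0 \<and> \<alpha> = 0 \<and> \<beta> = 0" if h: "tsc \<gamma> gmet + tsc \<alpha> ?k1 + tsc \<beta> ?k2 = 0" for \<gamma> \<alpha> \<beta>
  proof -
    have "s20 (lin2 \<alpha> q1 \<beta> q2) + tsc (-\<gamma>) gmet = kt_of (tsc \<gamma> gmet + tsc \<alpha> ?k1 + tsc \<beta> ?k2)"
      unfolding s20_lin2 by (auto simp: fun_eq_iff kt_of_app gmet_app)
    also have "\<dots> = s20 (0,0,0,0,0) + tsc 0 gmet" unfolding h by (simp add: kt_of_zero s20_zero tsc0)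
    finally have "lin2 \<alpha> q1 \<beta> q2 = (0,0,0,0,0) \<and> -\<gamma> = 0" using s20g_inj by blast
    then show ?thesis using lin_zero[OF assms] by auto
  qed
  note I = indep3[of gmet ?k1 ?k2, OF triv]
  have "tf.dim (Wof q1 q2) = card {gmet, ?k1, ?k2}"
    unfolding Wof_def using I by (simp add: tf.dim_eq_card_independent)
  also have "\<dots> = 3" using I by simp
  finally show ?thesis using sub unfolding FSI_def Wof_def by (auto intro: tf.span_base)
qed

lemma FSI_Wof: assumes W: "W \<in> FSI" shows "\<exists>q1 q2. plk q1 q2 \<noteq> 0 \<and> W = Wof q1 q2"
proof -
  have WKT: "W \<subseteq> KT" and sW: "tf.subspace W" and dW: "tf.dim W = 3" and gW: "gmet \<in> W"
    using W unfolding FSI_def by auto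
  have "tf.independent {gmet}" using gmet_nz by simp
  then obtain B where B: "{gmet} \<subseteq> B" "B \<subseteq> W" "tf.independent B" "W \<subseteq> tf.span B"
    using tf.maximal_independent_subset_extend[of "{gmet}" W] gW by blast
  have cB: "card B = 3" using tf.basis_card_eq_dim[OF B(2) B(4) B(3)] dW by simp
  then have fB: "finite B" using card.infinite by force
  have "card (B - {gmet}) = 2" using cB B(1) fB by simp
  then obtain w1 w2 where w: "B - {gmet} = {w1, w2}" "w1 \<noteq> w2" by (auto simp: card_2_iff)
  have Beq: "B = {gmet, w1, w2}" using w(1) B(1) by blast
  have gw: "gmet \<noteq> w1" "gmet \<noteq> w2" using w(1) by blast+
  have spB: "tf.span B = W" using tf.span_subspace[OF B(2) B(4) sW] .
  have "w1 \<in> KT" "w2 \<in> KT" using B(2) WKT Beq by auto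
  then obtain q1 t1 q2 t2 where wq: "w1 = kt_of (s20 q1 + tsc t1 gmet)" "w2 = kt_of (s20 q2 + tsc t2 gmet)"
    unfolding KT_char by blast
  let ?k1 = "kt_of (s20 q1)" and ?k2 = "kt_of (s20 q2)"
  have e1: "w1 = tsc (-t1) gmet + tsc 1 ?k1 + tsc 0 ?k2" "w2 = tsc (-t2) gmet + tsc 0 ?k1 + tsc 1 ?k2"
    unfolding wq by (auto simp: fun_eq_iff kt_of_app gmet_app)
  have e2: "?k1 = tsc t1 gmet + tsc 1 w1 + tsc 0 w2" "?k2 = tsc t2 gmet + tsc 0 w1 + tsc 1 w2"
    unfolding wq by (auto simp: fun_eq_iff kt_of_app gmet_app)
  have e3: "gmet = tsc 1 gmet + tsc 0 x + tsc 0 y" for x y :: tfield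
    by (auto simp: fun_eq_iff)
  have s1: "{gmet, w1, w2} \<subseteq> tf.span {gmet, ?k1, ?k2}" unfolding span3 using e1 e3 by blast
  have s2: "{gmet, ?k1, ?k2} \<subseteq> tf.span {gmet, w1, w2}" unfolding span3 using e2 e3 by blast
  have "tf.span {gmet, w1, w2} = tf.span {gmet, ?k1, ?k2}"
    using tf.span_eq s1 s2 by blast
  then have Weq: "W = Wof q1 q2" using spB Beq by (simp add: Wof_def)
  have "plk q1 q2 \<noteq> 0"
  proof
    assume "plk q1 q2 = 0"
    then obtain \<alpha> \<beta> where ab: "\<alpha> \<noteq> 0 \<or> \<beta> \<noteq> 0" "lin2 \<alpha> q1 \<beta> q2 = (0,0,0,0,0)"
      using plk_zero_dep by blast
    then have z: "tsc \<alpha> (s20 q1) + tsc \<beta> (s20 q2) = 0" by (simp add: s20_lin2_zero)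
    have z': "\<alpha> * s20 q1 p i + \<beta> * s20 q2 p i = 0" for p i
      using fun_cong[OF fun_cong[OF z, of p], of i] by simp
    have "tsc (\<alpha> * t1 + \<beta> * t2) gmet + tsc \<alpha> w1 + tsc \<beta> w2 = 0"
      unfolding wq
    proof (intro ext)
      fix p i
      show "(tsc (\<alpha> * t1 + \<beta> * t2) gmet + tsc \<alpha> (kt_of (s20 q1 + tsc t1 gmet)) + tsc \<beta> (kt_of (s20 q2 + tsc t2 gmet))) p i = 0 p i"
        using z'[of p i] by (cases i) (auto simp: kt_of_app gmet_app algebra_simps)
    qed
    then have "\<alpha> * t1 + \<beta> * t2 = 0 \<and> \<alpha> = 0 \<and> \<beta> = 0"
      using indep3_rev[of gmet w1 w2] gw w(2) B(3) Beq by blast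
    then show False using ab(1) by simp
  qed
  then show ?thesis using Weq by blast
qed

lemma proportional_sym: assumes "proportional a b" shows "proportional b a"
proof -
  obtain c where c: "c \<noteq> 0" "a = (\<lambda>k. c * b k)" using assms unfolding proportional_def by blast
  then have "b = (\<lambda>k. (1/c) * a k)" by (auto simp: fun_eq_iff)
  then show ?thesis unfolding proportional_def using c(1) by (intro exI[of _ "1/c"]) simp
qed

lemma plk_lin2: "plk (lin2 \<alpha> q1 \<beta> q2) (lin2 \<gamma> q1 \<delta> q2) x = (\<alpha>*\<delta> - \<beta>*\<gamma>) * plk q1 q2 x"
  unfolding plk_pp vq_lin2 pp_def by (simp add: algebra_simps)

lemma in_lin:
  assumes "plk q1 q2 = (\<lambda>x. c * plk r1 r2 x)" "plk q1 q2 \<noteq> 0"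
  shows "\<exists>\<alpha> \<beta>. r1 = lin2 \<alpha> q1 \<beta> q2" "\<exists>\<alpha> \<beta>. r2 = lin2 \<alpha> q1 \<beta> q2"
proof -
  obtain i j where ij: "pp (vq q1) (vq q2) i j \<noteq> 0" using plk_nz[OF assms(2)] by blast
  have P: "pp (vq q1) (vq q2) a b = c * pp (vq r1) (vq r2) a b" for a b using pp_prop[OF assms(1)] .
  have gen: "\<exists>\<alpha> \<beta>. r = lin2 \<alpha> q1 \<beta> q2" if "\<forall>k. vq r k * pp (vq r1) (vq r2) i j - vq r j * pp (vq r1) (vq r2) i k + vq r i * pp (vq r1) (vq r2) j k = 0" for r
  proof -
    have "\<forall>k. vq r k * pp (vq q1) (vq q2) i j - vq r j * pp (vq q1) (vq q2) i k + vq r i * pp (vq q1) (vq q2) j k = 0"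
    proof
      fix k
      have "vq r k * pp (vq q1) (vq q2) i j - vq r j * pp (vq q1) (vq q2) i k + vq r i * pp (vq q1) (vq q2) j k
        = c * (vq r k * pp (vq r1) (vq r2) i j - vq r j * pp (vq r1) (vq r2) i k + vq r i * pp (vq r1) (vq r2) j k)"
        unfolding P by (simp add: algebra_simps)
      then show "vq r k * pp (vq q1) (vq q2) i j - vq r j * pp (vq q1) (vq q2) i k + vq r i * pp (vq q1) (vq q2) j k = 0"
        using that by simp
    qed
    from cramer[OF ij this] obtain \<alpha> \<beta> where "\<forall>k. vq r k = \<alpha> * vq q1 k + \<beta> * vq q2 k" by blast
    then show ?thesis using vq_eq_lin2 by blast
  qed
  show "\<exists>\<alpha> \<beta>. r1 = lin2 \<alpha> q1 \<beta> q2" by (rule gen) (simp add: pp_def algebra_simps)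
  show "\<exists>\<alpha> \<beta>. r2 = lin2 \<alpha> q1 \<beta> q2" by (rule gen) (simp add: pp_def algebra_simps)
qed

lemma Pof_eq_prop:
  assumes "plk q1 q2 \<noteq> 0" "plk r1 r2 \<noteq> 0" "Pof q1 q2 = Pof r1 r2"
  shows "proportional (plk q1 q2) (plk r1 r2)"
proof -
  have "s20 r1 \<in> Pof r1 r2" "s20 r2 \<in> Pof r1 r2" unfolding Pof_def by (auto intro: tf.span_base)
  then have "s20 r1 \<in> Pof q1 q2" "s20 r2 \<in> Pof q1 q2" using assms(3) by simp_all
  then obtain \<alpha> \<beta> \<gamma> \<delta> where r: "r1 = lin2 \<alpha> q1 \<beta> q2" "r2 = lin2 \<gamma> q1 \<delta> q2" unfolding in_Pof by blast
  have pr: "plk r1 r2 = (\<lambda>x. (\<alpha>*\<delta> - \<beta>*\<gamma>) * plk q1 q2 x)" unfolding r by (simp add: plk_lin2 fun_eq_iff)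
  then have d: "\<alpha>*\<delta> - \<beta>*\<gamma> \<noteq> 0" using assms(2) by (auto simp: fun_eq_iff)
  have "plk q1 q2 = (\<lambda>x. (1/(\<alpha>*\<delta> - \<beta>*\<gamma>)) * plk r1 r2 x)" using d unfolding pr by (simp add: fun_eq_iff)
  then show ?thesis unfolding proportional_def using d by (intro exI[of _ "1/(\<alpha>*\<delta> - \<beta>*\<gamma>)"]) simp
qed

lemma prop_Pof_eq:
  assumes "plk q1 q2 \<noteq> 0" "plk r1 r2 \<noteq> 0" "proportional (plk q1 q2) (plk r1 r2)"
  shows "Pof q1 q2 = Pof r1 r2"
proof -
  have sub: "{s20 r1, s20 r2} \<subseteq> tf.span {s20 q1, s20 q2}"
    if h1: "plk q1 q2 \<noteq> 0" and h2: "proportional (plk q1 q2) (plk r1 r2)" for q1 q2 r1 r2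
  proof -
    obtain c where "plk q1 q2 = (\<lambda>x. c * plk r1 r2 x)" using h2 unfolding proportional_def by blast
    from in_lin[OF this h1] have "s20 r1 \<in> Pof q1 q2" "s20 r2 \<in> Pof q1 q2" unfolding in_Pof by auto
    then show ?thesis unfolding Pof_def by auto
  qed
  show ?thesis unfolding Pof_def tf.span_eq
    using sub[OF assms(1,3)] sub[OF assms(2) proportional_sym[OF assms(3)]] by blast
qed

lemma Wof_eq: assumes "plk q1 q2 \<noteq> 0" "plk r1 r2 \<noteq> 0" "Pof q1 q2 = Pof r1 r2"
  shows "Wof q1 q2 = Wof r1 r2"
proof -
  have sub: "{gmet, kt_of (s20 r1), kt_of (s20 r2)} \<subseteq> tf.span {gmet, kt_of (s20 q1), kt_of (s20 q2)}"
    if "Pof q1 q2 = Pof r1 r2" for q1 q2 r1 r2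
  proof -
    have "s20 r1 \<in> Pof r1 r2" "s20 r2 \<in> Pof r1 r2" unfolding Pof_def by (auto intro: tf.span_base)
    then have "s20 r1 \<in> Pof q1 q2" "s20 r2 \<in> Pof q1 q2" using that by simp_all
    then obtain \<alpha> \<beta> \<gamma> \<delta> where r: "r1 = lin2 \<alpha> q1 \<beta> q2" "r2 = lin2 \<gamma> q1 \<delta> q2" unfolding in_Pof by blast
    have "kt_of (s20 r1) = tsc 0 gmet + tsc \<alpha> (kt_of (s20 q1)) + tsc \<beta> (kt_of (s20 q2))"
      "kt_of (s20 r2) = tsc 0 gmet + tsc \<gamma> (kt_of (s20 q1)) + tsc \<delta> (kt_of (s20 q2))"
      unfolding r s20_lin2 kt_of_comb2 by simp_all
    moreover have "gmet = tsc 1 gmet + tsc 0 (kt_of (s20 q1)) + tsc 0 (kt_of (s20 q2))"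
      by (auto simp: fun_eq_iff)
    ultimately show ?thesis unfolding span3 by blast
  qed
  show ?thesis unfolding Wof_def tf.span_eq using sub[OF assms(3)] sub[OF assms(3)[symmetric]] by blast
qed



definition pid :: "nat \<Rightarrow> nat \<Rightarrow> pidx" where
 "pid k l = (if k=0 then (if l=1 then a30 else if l=2 then a20 else if l=3 then a10 else a00)
   else if k=1 then (if l=2 then a21 else if l=3 then a11 else a01)
   else if k=2 then (if l=3 then a12 else a02) else a03)"

definition Sm :: "(pidx \<Rightarrow> complex) \<Rightarrow> nat \<Rightarrow> nat \<Rightarrow> complex" where
 "Sm a k l = (if k = l then 0 else if k < l then a (pid k l) else - a (pid l k))"

lemma Sm_skew: "Sm a k l = - Sm a l k" by (simp add: Sm_def)
lemma Sm_diag[simp]: "Sm a k k = 0" by (simp add: Sm_def)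

lemma Sm_pos: "Sm a (fst (pos x)) (snd (pos x)) = a x"
  by (cases x) (simp_all add: Sm_def pos_def pid_def)

definition deca where "deca a u v \<longleftrightarrow> (\<forall>x. a x = pp u v (fst (pos x)) (snd (pos x)))"

lemma deca_rels:
  assumes "deca a u v"
  shows "a a03 * a a21 - a a02 * a a11 + a a01 * a a12 = 0
     \<and> a a03 * a a20 - a a02 * a a10 + a a00 * a a12 = 0
     \<and> a a03 * a a30 - a a01 * a a10 + a a00 * a a11 = 0
     \<and> a a02 * a a30 - a a01 * a a20 + a a00 * a a21 = 0
     \<and> a a12 * a a30 - a a11 * a a20 + a a10 * a a21 = 0"
proof -
  have h: "a x = pp u v (fst (pos x)) (snd (pos x))" for x using assms unfolding deca_def by blast
  show ?thesis unfolding h by (simp add: pos_def pp_def) (intro conjI; algebra)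
qed

lemma decomp:
  assumes "a \<in> plucker_var"
  shows "\<exists>u v. deca a u v"
proof -
  have R: "a a03 * a a21 - a a02 * a a11 + a a01 * a a12 = 0"
     "a a03 * a a20 - a a02 * a a10 + a a00 * a a12 = 0"
     "a a03 * a a30 - a a01 * a a10 + a a00 * a a11 = 0"
     "a a02 * a a30 - a a01 * a a20 + a a00 * a a21 = 0"
     "a a12 * a a30 - a a11 * a a20 + a a10 * a a21 = 0" and nz: "a \<noteq> 0"
    using assms unfolding plucker_var_def by auto
  obtain x0 where x0: "a x0 \<noteq> 0" using nz by (auto simp: fun_eq_iff)
  define i where "i = fst (pos x0)"
  define j where "j = snd (pos x0)"
  define u where "u k = Sm a i k / Sm a i j" for k
  define v where "v l = Sm a j l" for l
  have "deca a u v" unfolding deca_def u_def v_def i_def j_def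
    using x0 R by (cases x0; intro allI; case_tac x; simp add: pp_def pos_def Sm_def pid_def field_simps; algebra?)
  then show ?thesis by blast
qed



definition e5 :: "nat \<Rightarrow> 5" where "e5 k = Abs_bit1 (int k)"

lemma ix5_lt: "ix5 r < 5"
  unfolding ix5_def using Rep_bit1[of r] by auto

lemma ix5_e5: "k < 5 \<Longrightarrow> ix5 (e5 k) = k"
  unfolding ix5_def e5_def by (simp add: Abs_bit1_inverse)

lemma e5_ix5: "e5 (ix5 r) = r"
  unfolding ix5_def e5_def using Rep_bit1[of r] by (simp add: Rep_bit1_inverse)

lemma skew_lookup: "m < 5 \<Longrightarrow> n < 5 \<Longrightarrow>
     [[0, a a30, a a20, a a10, a a00],
      [- a a30, 0, a a21, a a11, a a01],
      [- a a20, - a a21, 0, a a12, a a02],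
      [- a a10, - a a11, - a a12, 0, a a03],
      [- a a00, - a a01, - a a02, - a a03, 0]] ! m ! n = Sm a m n"
proof -
  assume "m < 5" "n < 5"
  then have "m = 0 \<or> m = 1 \<or> m = 2 \<or> m = 3 \<or> m = 4" "n = 0 \<or> n = 1 \<or> n = 2 \<or> n = 3 \<or> n = 4" by arith+
  then show ?thesis by (elim disjE) (simp_all add: Sm_def pid_def)
qed

lemma skew_entry: "skewmat a $ r $ c = Sm a (ix5 r) (ix5 c)"
  unfolding skewmat_def using skew_lookup[OF ix5_lt ix5_lt] by simp

lemma vspan2: "z \<in> vec.span {x, y} \<Longrightarrow> \<exists>\<alpha> \<beta>. z = \<alpha> *s x + \<beta> *s y"
proof -
  assume "z \<in> vec.span {x, y}"
  then obtain k where "z - k *s x \<in> vec.span {y}" using vec.span_breakdown_eq[of z x "{y}"] by blast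
  then obtain m where "z - k *s x = m *s y" unfolding vec.span_singleton by blast
  then have "z = k *s x + m *s y" by (metis add.commute diff_add_cancel)
  then show ?thesis by blast
qed

lemma rank_iff:
  fixes a :: "pidx \<Rightarrow> complex"
  assumes nz: "a \<noteq> 0"
  shows "rank (skewmat a) = 2 \<longleftrightarrow> (\<exists>u v. deca a u v)"
proof -
  define M where "M = skewmat a"
  define R where "R k = row (e5 k) M" for k
  have Rc: "R k $ c = Sm a k (ix5 c)" if "k < 5" for k c
    unfolding R_def M_def row_def using that by (simp add: skew_entry ix5_e5)
  have rows: "rows M = {R k | k. k < 5}"
    unfolding rows_def R_def using ix5_lt e5_ix5 by (auto intro: exI[of _ "ix5 r" for r] simp: R_def)
  obtain x0 where x0: "a x0 \<noteq> 0" using nz by (auto simp: fun_eq_iff)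
  define i where "i = fst (pos x0)"
  define j where "j = snd (pos x0)"
  have ij: "i < 5" "j < 5" unfolding i_def j_def by (cases x0; simp add: pos_def)+
  have Sij: "Sm a i j \<noteq> 0" using x0 Sm_pos[of a x0] unfolding i_def j_def by simp
  have Rne: "R i \<noteq> R j"
  proof
    assume "R i = R j"
    then have "R i $ e5 j = R j $ e5 j" by simp
    then show False using Sij by (simp add: Rc ij ix5_e5)
  qed
  have Rj0: "R j \<noteq> 0"
  proof
    assume "R j = 0"
    then have "R j $ e5 i = 0" by simp
    then show False using Sij Sm_skew[of a j i] by (simp add: Rc ij ix5_e5)
  qed
  have Rsp: "R i \<notin> vec.span {R j}"
  proof
    assume "R i \<in> vec.span {R j}"
    then obtain t where "R i = t *s R j" unfolding vec.span_singleton by blast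
    then have "R i $ e5 j = t * (R j $ e5 j)" by simp
    then show False using Sij by (simp add: Rc ij ix5_e5)
  qed
  have ind: "vec.independent {R i, R j}"
    using Rne Rj0 Rsp by (simp add: vec.independent_insert)
  have card2: "card {R i, R j} = 2" using Rne by simp
  have sub: "{R i, R j} \<subseteq> rows M" unfolding rows using ij by blast
  have rk: "rank M = vec.dim (rows M)" by (simp add: row_rank_def_gen)
  show ?thesis unfolding M_def[symmetric]
  proof
    assume r2: "rank M = 2"
    have span: "rows M \<subseteq> vec.span {R i, R j}"
      using vec.card_eq_dim[OF sub] card2 r2 rk ind by simp
    have key: "Sm a k l * Sm a i j = Sm a i k * Sm a j l - Sm a i l * Sm a j k" if kl: "k < 5" "l < 5" for k l
    proof -
      have "R k \<in> vec.span {R i, R j}" using span kl unfolding rows by blast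
      then obtain \<alpha> \<beta> where e: "R k = \<alpha> *s R i + \<beta> *s R j" using vspan2 by blast
      have ec: "Sm a k n = \<alpha> * Sm a i n + \<beta> * Sm a j n" if "n < 5" for n
        using arg_cong[OF e, of "\<lambda>z. z $ e5 n"] that kl ij by (simp add: Rc ix5_e5)
      have e1: "Sm a k i = \<alpha> * Sm a i i + \<beta> * Sm a j i" using ec ij by blast
      have e2: "Sm a k j = \<alpha> * Sm a i j + \<beta> * Sm a j j" using ec ij by blast
      have e3: "Sm a k l = \<alpha> * Sm a i l + \<beta> * Sm a j l" using ec kl by blast
      have s1: "Sm a i k = - Sm a k i" "Sm a j i = - Sm a i j" "Sm a j k = - Sm a k j"
        by (simp_all add: Sm_skew[of a _ k] Sm_skew[of a j i])
      show ?thesis using e1 e2 e3 s1 by (simp add: algebra_simps)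
    qed
    define u where "u k = Sm a i k / Sm a i j" for k
    define v where "v l = Sm a j l" for l
    have "deca a u v" unfolding deca_def
    proof
      fix x
      have kl: "fst (pos x) < 5" "snd (pos x) < 5" by (cases x; simp add: pos_def)+
      show "a x = pp u v (fst (pos x)) (snd (pos x))"
        using key[OF kl] Sij unfolding Sm_pos[of a x, symmetric] u_def v_def pp_def
        by (simp add: field_simps)
    qed
    then show "\<exists>u v. deca a u v" by blast
  next
    assume "\<exists>u v. deca a u v"
    then obtain u v where d: "deca a u v" by blast
    have S: "Sm a k l = pp u v k l" if "k \<le> 4" "l \<le> 4" for k l
    proof (rule idx_cases[OF _ _ _ that])
      show "Sm a (fst (pos x)) (snd (pos x)) = pp u v (fst (pos x)) (snd (pos x))" for x
        using d unfolding deca_def Sm_pos by blast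
      show "Sm a b c = pp u v b c" if "Sm a c b = pp u v c b" for b c
        using that Sm_skew[of a b c] by (simp add: pp_def)
      show "Sm a b b = pp u v b b" for b by (simp add: pp_def)
    qed
    define U :: "complex^5" where "U = (\<chi> c. u (ix5 c))"
    define V :: "complex^5" where "V = (\<chi> c. v (ix5 c))"
    have RR: "R k = u k *s V - v k *s U" if "k < 5" for k
      unfolding vec_eq_iff
    proof
      fix c
      have "Sm a k (ix5 c) = pp u v k (ix5 c)" using S[of k "ix5 c"] that ix5_lt[of c] by simp
      then show "R k $ c = (u k *s V - v k *s U) $ c" by (simp add: Rc[OF that] U_def V_def pp_def algebra_simps)
    qed
    have "rows M \<subseteq> vec.span {U, V}" unfolding rows
    proof (intro subsetI)
      fix z assume "z \<in> {R k |k. k < 5}"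
      then obtain k where k: "k < 5" "z = R k" by blast
      have "U \<in> vec.span {U,V}" "V \<in> vec.span {U,V}" by (auto intro: vec.span_base)
      then show "z \<in> vec.span {U,V}" using k RR[OF k(1)] by (simp add: vec.span_diff vec.span_scale)
    qed
    then have le: "vec.dim (rows M) \<le> card {U, V}" by (intro vec.dim_le_card) auto
    have "card {U, V} \<le> 2" by (simp add: card_insert_if)
    moreover have "2 \<le> vec.dim (rows M)" using vec.independent_card_le_dim[OF sub ind] card2 by simp
    ultimately show "rank M = 2" using le rk by simp
  qed
qed



lemma G2_Pof: assumes "P \<in> G2S20" shows "\<exists>q1 q2. plk q1 q2 \<noteq> 0 \<and> P = Pof q1 q2"
proof -
  have PS: "P \<subseteq> S20" and sP: "tf.subspace P" and dP: "tf.dim P = 2" using assms unfolding G2S20_def by auto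
  obtain B where B: "B \<subseteq> P" "tf.independent B" "P \<subseteq> tf.span B" "card B = tf.dim P"
    by (rule tf.basis_exists[of P])
  have "card B = 2" using B(4) dP by simp
  then obtain p1 p2 where p: "B = {p1, p2}" "p1 \<noteq> p2" by (meson card_2_iff)
  have "p1 \<in> S20" "p2 \<in> S20" using p(1) B(1) PS by blast+
  then obtain q1 q2 where q: "p1 = s20 q1" "p2 = s20 q2" unfolding S20_def by blast
  have sB: "tf.span B = P" using tf.span_subspace[OF B(1) B(3) sP] .
  have Bq: "B = {s20 q1, s20 q2}" using p(1) q by simp
  have "is_basis2 P q1 q2" unfolding is_basis2_def using p(2) B(2) sB unfolding Bq q by simp
  then have "plk q1 q2 \<noteq> 0 \<and> P = Pof q1 q2" using basis_iff[of P q1 q2] by simp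
  then show ?thesis by blast
qed

definition tq :: "(nat \<Rightarrow> complex) \<Rightarrow> complex\<times>complex\<times>complex\<times>complex\<times>complex" where
  "tq u = (u 0, u 4, u 1 / 2, u 3 / 2, u 2)"

lemma vq_tq: assumes "k \<le> 4" shows "vq (tq u) k = u k"
proof -
  have "k = 0 \<or> k = 1 \<or> k = 2 \<or> k = 3 \<or> k = 4" using assms by arith
  then show ?thesis by (elim disjE) (simp_all add: tq_def vq_def)
qed

lemma pos_le: "fst (pos x) \<le> 4" "snd (pos x) \<le> 4" by (cases x; simp add: pos_def)+

lemma plk_tq: assumes "deca a u v" shows "plk (tq u) (tq v) = a"
proof
  fix x show "plk (tq u) (tq v) x = a x"
    using assms unfolding deca_def plk_pp pp_def by (simp add: vq_tq pos_le)
qed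

lemma plk_deca: "deca (plk q1 q2) (vq q1) (vq q2)"
  unfolding deca_def plk_pp by simp

lemma plk_var: "plk q1 q2 \<noteq> 0 \<Longrightarrow> plk q1 q2 \<in> plucker_var"
  using deca_rels[OF plk_deca] unfolding plucker_var_def by simp

theorem proposition2p8:
  shows "bij_betw PW FSI G2S20 \<and>
    (\<forall>W\<in>FSI. \<exists>q1 q2. is_basis2 (PW W) q1 q2) \<and>
    (\<forall>W\<in>FSI. \<forall>q1 q2. is_basis2 (PW W) q1 q2 \<longrightarrow> plk q1 q2 \<in> plucker_var) \<and>
    (\<forall>W\<in>FSI. \<forall>q1 q2 r1 r2. is_basis2 (PW W) q1 q2 \<longrightarrow> is_basis2 (PW W) r1 r2
       \<longrightarrow> proportional (plk q1 q2) (plk r1 r2)) \<and>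
    (\<forall>W1\<in>FSI. \<forall>W2\<in>FSI. \<forall>q1 q2 r1 r2. is_basis2 (PW W1) q1 q2 \<longrightarrow> is_basis2 (PW W2) r1 r2
       \<longrightarrow> proportional (plk q1 q2) (plk r1 r2) \<longrightarrow> W1 = W2) \<and>
    (\<forall>a\<in>plucker_var. \<exists>W\<in>FSI. \<exists>q1 q2. is_basis2 (PW W) q1 q2 \<and> proportional a (plk q1 q2)) \<and>
    plucker_var = {a. a \<noteq> 0 \<and> rank (skewmat a) = 2}"
proof -
  have inj: "inj_on PW FSI"
  proof (rule inj_onI)
    fix W1 W2 assume W: "W1 \<in> FSI" "W2 \<in> FSI" "PW W1 = PW W2"
    obtain q1 q2 where q: "plk q1 q2 \<noteq> 0" "W1 = Wof q1 q2" using FSI_Wof[OF W(1)] by blast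
    obtain r1 r2 where r: "plk r1 r2 \<noteq> 0" "W2 = Wof r1 r2" using FSI_Wof[OF W(2)] by blast
    have "Pof q1 q2 = Pof r1 r2" using W(3) q r by (simp add: PW_Wof)
    then show "W1 = W2" using Wof_eq q r by blast
  qed
  have img: "PW ` FSI = G2S20"
  proof
    show "PW ` FSI \<subseteq> G2S20"
    proof
      fix P assume "P \<in> PW ` FSI"
      then obtain W where W: "W \<in> FSI" "P = PW W" by blast
      obtain q1 q2 where q: "plk q1 q2 \<noteq> 0" "W = Wof q1 q2" using FSI_Wof[OF W(1)] by blast
      show "P \<in> G2S20" using W(2) q Pof_G2 by (simp add: PW_Wof)
    qed
    show "G2S20 \<subseteq> PW ` FSI"
    proof
      fix P assume "P \<in> G2S20"
      then obtain q1 q2 where q: "plk q1 q2 \<noteq> 0" "P = Pof q1 q2" using G2_Pof by blast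
      then have "P = PW (Wof q1 q2)" "Wof q1 q2 \<in> FSI" using Wof_FSI by (simp_all add: PW_Wof)
      then show "P \<in> PW ` FSI" by blast
    qed
  qed
  have c1: "bij_betw PW FSI G2S20" using inj img by (simp add: bij_betw_def)
  have c2: "\<forall>W\<in>FSI. \<exists>q1 q2. is_basis2 (PW W) q1 q2"
  proof
    fix W assume "W \<in> FSI"
    then obtain q1 q2 where q: "plk q1 q2 \<noteq> 0" "W = Wof q1 q2" using FSI_Wof by blast
    then have "is_basis2 (PW W) q1 q2" using basis_iff by (simp add: PW_Wof)
    then show "\<exists>q1 q2. is_basis2 (PW W) q1 q2" by blast
  qed
  have c3: "\<forall>W\<in>FSI. \<forall>q1 q2. is_basis2 (PW W) q1 q2 \<longrightarrow> plk q1 q2 \<in> plucker_var"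
  proof (intro ballI allI impI)
    fix W q1 q2 assume "is_basis2 (PW W) q1 q2"
    then have "plk q1 q2 \<noteq> 0" using basis_iff by blast
    then show "plk q1 q2 \<in> plucker_var" by (rule plk_var)
  qed
  have c4: "\<forall>W\<in>FSI. \<forall>q1 q2 r1 r2. is_basis2 (PW W) q1 q2 \<longrightarrow> is_basis2 (PW W) r1 r2
       \<longrightarrow> proportional (plk q1 q2) (plk r1 r2)"
  proof (intro ballI allI impI)
    fix W q1 q2 r1 r2 assume "is_basis2 (PW W) q1 q2" "is_basis2 (PW W) r1 r2"
    then have "plk q1 q2 \<noteq> 0" "plk r1 r2 \<noteq> 0" "Pof q1 q2 = Pof r1 r2" using basis_iff by auto
    then show "proportional (plk q1 q2) (plk r1 r2)" by (rule Pof_eq_prop)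
  qed
  have c5: "\<forall>W1\<in>FSI. \<forall>W2\<in>FSI. \<forall>q1 q2 r1 r2. is_basis2 (PW W1) q1 q2 \<longrightarrow> is_basis2 (PW W2) r1 r2
       \<longrightarrow> proportional (plk q1 q2) (plk r1 r2) \<longrightarrow> W1 = W2"
  proof (intro ballI allI impI)
    fix W1 W2 q1 q2 r1 r2 assume W: "W1 \<in> FSI" "W2 \<in> FSI"
      and b: "is_basis2 (PW W1) q1 q2" "is_basis2 (PW W2) r1 r2" and p: "proportional (plk q1 q2) (plk r1 r2)"
    have h: "plk q1 q2 \<noteq> 0" "plk r1 r2 \<noteq> 0" "PW W1 = Pof q1 q2" "PW W2 = Pof r1 r2" using b basis_iff by auto
    have "PW W1 = PW W2" using prop_Pof_eq[OF h(1,2) p] h(3,4) by simp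
    then show "W1 = W2" using inj W by (simp add: inj_on_def)
  qed
  have c6: "\<forall>a\<in>plucker_var. \<exists>W\<in>FSI. \<exists>q1 q2. is_basis2 (PW W) q1 q2 \<and> proportional a (plk q1 q2)"
  proof
    fix a assume a: "a \<in> plucker_var"
    obtain u v where d: "deca a u v" using decomp[OF a] by blast
    have pa: "plk (tq u) (tq v) = a" using plk_tq[OF d] .
    have nz: "plk (tq u) (tq v) \<noteq> 0" using a pa unfolding plucker_var_def by simp
    have "is_basis2 (PW (Wof (tq u) (tq v))) (tq u) (tq v)" using nz basis_iff by (simp add: PW_Wof)
    moreover have "proportional a (plk (tq u) (tq v))" unfolding pa proportional_def by (intro exI[of _ 1]) simp
    ultimately show "\<exists>W\<in>FSI. \<exists>q1 q2. is_basis2 (PW W) q1 q2 \<and> proportional a (plk q1 q2)"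
      using Wof_FSI[OF nz] by blast
  qed
  have c7: "plucker_var = {a. a \<noteq> 0 \<and> rank (skewmat a) = 2}"
  proof (intro set_eqI iffI)
    fix a assume a: "a \<in> plucker_var"
    then have "a \<noteq> 0" unfolding plucker_var_def by simp
    moreover have "rank (skewmat a) = 2" using rank_iff[OF \<open>a \<noteq> 0\<close>] decomp[OF a] by blast
    ultimately show "a \<in> {a. a \<noteq> 0 \<and> rank (skewmat a) = 2}" by blast
  next
    fix a assume "a \<in> {a. a \<noteq> 0 \<and> rank (skewmat a) = 2}"
    then have a: "a \<noteq> 0" "rank (skewmat a) = 2" by auto
    then obtain u v where d: "deca a u v" using rank_iff[OF a(1)] by blast
    show "a \<in> plucker_var" using deca_rels[OF d] a(1) unfolding plucker_var_def by blast
  qed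
  show ?thesis by (intro conjI c1 c2 c3 c4 c5 c6 c7)
qed

end
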